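(* Let $\rho_1,\dots,\rho_\omega>0$, $\gamma\in(0,1)$, and let $\rho_{total}=\sum_{i=1}^{\omega}\rho_i$. Then the SafeTab-P algorithm (described in the context) with privacy-loss parameters $\rho_1,\dots,\rho_\omega$ and fraction $\gamma$ satisfies bounded $2\rho_{total}$-zCDP with respect to its input dataset.
   Context: Records come from a domain $\mathcal{I}$; each record has (among other attributes) a sex in $\{\text{Male},\text{Female}\}$ and an age. A dataset $x$ is a finite multiset of records. Two datasets $x,x'$ are bounded neighbors if they contain the same number of records and are identical except for a single record (one record replaced by another). For $\alpha>1$, $D_\alpha(P\|Q)=\frac{1}{\alpha-1}\log\left(\mathbb{E}_{y\sim P}[(P(y)/Q(y))^{\alpha-1}]\right)$; a randomized algorithm $M$ satisfies bounded $\rho$-zCDP if $D_\alpha(M(x)\|M(x'))\le\alpha\rho$ for all bounded neighbors $x,x'$ and all $\alpha>1$. Discrete Gaussian: $\mathcal{N}_{\mathbb{Z}}(\sigma^2)$ on $\mathbb{Z}$ has $\Pr[X=x]\propto e^{-x^2/(2\sigma^2)}$. For $a\in\mathbb{Z}^n$, $\textsc{NoisyCount}(a,\rho)=a+Y$ with $Y$ having $n$ independent $\mathcal{N}_{\mathbb{Z}}(1/(2\rho))$ coordinates. Setup: there are finite sets (population group levels) $\mathcal{P}_1,\dots,\mathcal{P}_\omega$ of population groups, maps $g_i:\mathcal{I}\to 2^{\mathcal{P}_i}$ assigning to each record the population groups in level $i$ it belongs to, with stability $s_i=\max_{r\in\mathcal{I}}|g_i(r)|\ge 1$ (a data-independent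 quantity). There is a fixed (data-independent) set $\mathrm{TotalOnly}$ of population groups, thresholds $\Theta_1,\Theta_2,\Theta_3$, and age-bucketing maps $b_4,b_9,b_{23}$ sending ages into $4$, $9$, $23$ bins. For a multiset $y$ of records, $h_K(y)\in\mathbb{Z}^{2K}$ is its histogram over (sex, $b_K(\text{age})$). Procedure $\textsc{Tab}(y,P,\rho,\gamma)$: if $P\in\mathrm{TotalOnly}$ output $\textsc{NoisyCount}(|y|,\rho)$; otherwise let $t=\textsc{NoisyCount}(|y|,\gamma\rho)$ and output $\textsc{NoisyCount}(|y|,(1-\gamma)\rho)$ if $t<\Theta_1$, else $\textsc{NoisyCount}(h_4(y),(1-\gamma)\rho)$ if $t<\Theta_2$, else $\textsc{NoisyCount}(h_9(y),(1-\gamma)\rho)$ if $t<\Theta_3$, else $\textsc{NoisyCount}(h_{23}(y),(1-\gamma)\rho)$. SafeTab-P on dataset $x$: for each $i=1,\dots,\omega$ and each $P\in\mathcal{P}_i$, let $x_P$ be the multiset of records $r\in x$ (with multiplicity) such that $P\in g_i(r)$, and output $\textsc{Tab}(x_P,P,\rho_i/s_i,\gamma)$. All noise draws across all calls are independent. *)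

theory Defs
  imports "HOL-Probability.Probability" "HOL-Library.Multiset"
begin

datatype sex = Male | Female

definition discrete_gaussian :: "real \<Rightarrow> int pmf" where
  "discrete_gaussian s2 = embed_pmf (\<lambda>x::int.
      exp (- (real_of_int x * real_of_int x) / (2 * s2)) /
      infsum (\<lambda>z::int. exp (- (real_of_int z * real_of_int z) / (2 * s2))) UNIV)"

fun noisy_count :: "int list \<Rightarrow> real \<Rightarrow> int list pmf" where
  "noisy_count [] rho = return_pmf []"
| "noisy_count (a # as) rho =
     bind_pmf (discrete_gaussian (1 / (2 * rho))) (\<lambda>y.
     bind_pmf (noisy_count as rho) (\<lambda>ys. return_pmf ((a + y) # ys)))"

definition hist :: "('r \<Rightarrow> sex) \<Rightarrow> ('r \<Rightarrow> 'a) \<Rightarrow> ('a \<Rightarrow> nat) \<Rightarrow> nat \<Rightarrow> 'r multiset \<Rightarrow> int list" where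
  "hist sex_of age_of b K y =
     [int (size (filter_mset (\<lambda>r. sex_of r = s \<and> b (age_of r) = j) y)). s \<leftarrow> [Male, Female], j \<leftarrow> [0..<K]]"

definition tab ::
  "'p set \<Rightarrow> real \<Rightarrow> real \<Rightarrow> real \<Rightarrow> ('r \<Rightarrow> sex) \<Rightarrow> ('r \<Rightarrow> 'a) \<Rightarrow>
   ('a \<Rightarrow> nat) \<Rightarrow> ('a \<Rightarrow> nat) \<Rightarrow> ('a \<Rightarrow> nat) \<Rightarrow>
   'r multiset \<Rightarrow> 'p \<Rightarrow> real \<Rightarrow> real \<Rightarrow> int list pmf" where
  "tab TotalOnly \<Theta>1 \<Theta>2 \<Theta>3 sex_of age_of b4 b9 b23 y P rho \<gamma> =
     (if P \<in> TotalOnly then noisy_count [int (size y)] rho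
      else bind_pmf (noisy_count [int (size y)] (\<gamma> * rho)) (\<lambda>tl.
        let t = real_of_int (hd tl) in
        if t < \<Theta>1 then noisy_count [int (size y)] ((1 - \<gamma>) * rho)
        else if t < \<Theta>2 then noisy_count (hist sex_of age_of b4 4 y) ((1 - \<gamma>) * rho)
        else if t < \<Theta>3 then noisy_count (hist sex_of age_of b9 9 y) ((1 - \<gamma>) * rho)
        else noisy_count (hist sex_of age_of b23 23 y) ((1 - \<gamma>) * rho)))"

definition stability :: "(nat \<Rightarrow> 'r \<Rightarrow> 'p set) \<Rightarrow> nat \<Rightarrow> nat" where
  "stability g i = Max ((\<lambda>r. card (g i r)) ` UNIV)"

definition safetab_p ::
  "nat \<Rightarrow> (nat \<Rightarrow> 'p set) \<Rightarrow> (nat \<Rightarrow> 'r \<Rightarrow> 'p set) \<Rightarrow>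
   'p set \<Rightarrow> real \<Rightarrow> real \<Rightarrow> real \<Rightarrow> ('r \<Rightarrow> sex) \<Rightarrow> ('r \<Rightarrow> 'a) \<Rightarrow>
   ('a \<Rightarrow> nat) \<Rightarrow> ('a \<Rightarrow> nat) \<Rightarrow> ('a \<Rightarrow> nat) \<Rightarrow>
   (nat \<Rightarrow> real) \<Rightarrow> real \<Rightarrow> 'r multiset \<Rightarrow> (nat \<times> 'p \<Rightarrow> int list) pmf" where
  "safetab_p \<omega> Pl g TotalOnly \<Theta>1 \<Theta>2 \<Theta>3 sex_of age_of b4 b9 b23 rho \<gamma> x =
     Pi_pmf (SIGMA i:{1..\<omega>}. Pl i) []
       (\<lambda>(i, P). tab TotalOnly \<Theta>1 \<Theta>2 \<Theta>3 sex_of age_of b4 b9 b23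
                   (filter_mset (\<lambda>r. P \<in> g i r) x) P (rho i / real (stability g i)) \<gamma>)"

definition renyi_div :: "real \<Rightarrow> 'b pmf \<Rightarrow> 'b pmf \<Rightarrow> ereal" where
  "renyi_div \<alpha> P Q =
     (if set_pmf P \<subseteq> set_pmf Q then
        (let S = (\<integral>\<^sup>+ y. ennreal ((pmf P y / pmf Q y) powr (\<alpha> - 1)) \<partial>measure_pmf P)
         in if S = \<top> then \<infinity> else ereal (ln (enn2real S) / (\<alpha> - 1)))
      else \<infinity>)"

definition bounded_neighbors :: "'r multiset \<Rightarrow> 'r multiset \<Rightarrow> bool" where
  "bounded_neighbors x x' \<longleftrightarrow> size x = size x' \<and>
     (\<exists>z r r'. x = add_mset r z \<and> x' = add_mset r' z)"

definition bounded_zCDP :: "('r multiset \<Rightarrow> 'b pmf) \<Rightarrow> real \<Rightarrow> bool" where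
  "bounded_zCDP M rho \<longleftrightarrow>
     (\<forall>x x'. bounded_neighbors x x' \<longrightarrow> (\<forall>\<alpha>>1. renyi_div \<alpha> (M x) (M x') \<le> ereal (\<alpha> * rho)))"

end

theory Submission
  imports Defs "HOL-Library.Nat_Bijection"
begin

definition R :: "real \<Rightarrow> 'b pmf \<Rightarrow> 'b pmf \<Rightarrow> ennreal" where
  "R \<alpha> P Q = (\<integral>\<^sup>+ y. ennreal (pmf P y powr \<alpha> * pmf Q y powr (1 - \<alpha>)) \<partial>count_space UNIV)"

definition rb :: "real \<Rightarrow> 'b pmf \<Rightarrow> 'b pmf \<Rightarrow> real \<Rightarrow> bool" where
  "rb \<alpha> P Q B \<longleftrightarrow> set_pmf P \<subseteq> set_pmf Q \<and> R \<alpha> P Q \<le> ennreal B"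

lemma holder_pt:
  fixes \<alpha> r a b :: real
  assumes "\<alpha> > 1" "r > 0" "a \<ge> 0" "b > 0"
  shows "\<alpha> * r powr (\<alpha> - 1) * a \<le> a powr \<alpha> * b powr (1 - \<alpha>) + (\<alpha> - 1) * r powr \<alpha> * b"
proof (cases "a = 0")
  case True thus ?thesis using assms by simp
next
  case False
  hence a: "a > 0" using assms by simp
  have Y: "(a powr \<alpha> * b powr (1 - \<alpha>)) powr (1/\<alpha>) * (r powr \<alpha> * b) powr ((\<alpha>-1)/\<alpha>)
      \<le> (1/\<alpha>) * (a powr \<alpha> * b powr (1 - \<alpha>)) + ((\<alpha>-1)/\<alpha>) * (r powr \<alpha> * b)"
    using assms a by (intro Youngs_inequality_0) (auto simp: field_simps)
  have "(a powr \<alpha> * b powr (1 - \<alpha>)) powr (1/\<alpha>) * (r powr \<alpha> * b) powr ((\<alpha>-1)/\<alpha>)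
        = a * r powr (\<alpha> - 1) * (b powr ((1-\<alpha>)/\<alpha>) * b powr ((\<alpha>-1)/\<alpha>))"
    using assms a by (simp add: powr_mult powr_powr)
  also have "b powr ((1-\<alpha>)/\<alpha>) * b powr ((\<alpha>-1)/\<alpha>) = 1"
    using assms by (simp add: powr_add[symmetric] field_simps)
  finally have "a * r powr (\<alpha> - 1) \<le> (1/\<alpha>) * (a powr \<alpha> * b powr (1 - \<alpha>)) + ((\<alpha>-1)/\<alpha>) * (r powr \<alpha> * b)"
    using Y by simp
  hence "\<alpha> * (a * r powr (\<alpha> - 1)) \<le> \<alpha> * ((1/\<alpha>) * (a powr \<alpha> * b powr (1 - \<alpha>)) + ((\<alpha>-1)/\<alpha>) * (r powr \<alpha> * b))"
    using assms by (intro mult_left_mono) auto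
  also have "\<dots> = a powr \<alpha> * b powr (1 - \<alpha>) + (\<alpha> - 1) * r powr \<alpha> * b"
    using assms by (simp add: field_simps)
  finally show ?thesis by (simp add: mult_ac)
qed

lemma nn_point_le:
  fixes f :: "'t \<Rightarrow> ennreal"
  shows "f t \<le> (\<integral>\<^sup>+ x. f x \<partial>count_space UNIV)"
proof -
  have "(\<integral>\<^sup>+ x. f t * indicator {t} x \<partial>count_space UNIV) \<le> (\<integral>\<^sup>+ x. f x \<partial>count_space UNIV)"
    by (intro nn_integral_mono) (auto simp: indicator_def)
  moreover have "(\<integral>\<^sup>+ x. f t * indicator {t} x \<partial>count_space UNIV) = f t"
    by (simp add: nn_integral_cmult_indicator)
  ultimately show ?thesis by simp
qed

lemma holder_sum:
  fixes a b :: "'t \<Rightarrow> real" and \<alpha> A B :: real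
  assumes al: "\<alpha> > 1" and a0: "\<And>t. a t \<ge> 0" and b0: "\<And>t. b t \<ge> 0"
    and ab: "\<And>t. a t > 0 \<Longrightarrow> b t > 0"
    and SA: "(\<integral>\<^sup>+ t. ennreal (a t) \<partial>count_space UNIV) = ennreal A" and A0: "A \<ge> 0"
    and SB: "(\<integral>\<^sup>+ t. ennreal (b t) \<partial>count_space UNIV) = ennreal B" and B0: "B \<ge> 0"
  shows "ennreal (A powr \<alpha> * B powr (1 - \<alpha>))
     \<le> (\<integral>\<^sup>+ t. ennreal (a t powr \<alpha> * b t powr (1 - \<alpha>)) \<partial>count_space UNIV)"
proof (cases "A = 0")
  case True thus ?thesis by simp
next
  case False
  hence Apos: "A > 0" using A0 by simp
  have Bpos: "B > 0"
  proof (rule ccontr)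
    assume "\<not> B > 0" hence "B = 0" using B0 by simp
    have "b t = 0" for t
    proof -
      have "ennreal (b t) \<le> 0" using nn_point_le[of "\<lambda>t. ennreal (b t)" t] SB \<open>B = 0\<close> by simp
      thus ?thesis using b0[of t] by simp
    qed
    hence "\<And>t. b t = 0" by blast
    hence "\<And>t. a t = 0" using ab a0 by (metis less_eq_real_def less_irrefl)
    hence "(\<integral>\<^sup>+ t. ennreal (a t) \<partial>count_space UNIV) = 0" by simp
    thus False using SA Apos by simp
  qed
  define r where "r = A / B"
  have r: "r > 0" using Apos Bpos by (simp add: r_def)
  define X where "X = A powr \<alpha> * B powr (1 - \<alpha>)"
  have X0: "X \<ge> 0" by (simp add: X_def)
  have pt: "ennreal (\<alpha> * r powr (\<alpha> - 1) * a t)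
      \<le> ennreal (a t powr \<alpha> * b t powr (1 - \<alpha>)) + ennreal ((\<alpha> - 1) * r powr \<alpha> * b t)" for t
  proof (cases "b t > 0")
    case True
    hence "\<alpha> * r powr (\<alpha> - 1) * a t \<le> a t powr \<alpha> * b t powr (1 - \<alpha>) + (\<alpha> - 1) * r powr \<alpha> * b t"
      using holder_pt[OF al r a0 True] by simp
    hence "ennreal (\<alpha> * r powr (\<alpha> - 1) * a t) \<le> ennreal (a t powr \<alpha> * b t powr (1 - \<alpha>) + (\<alpha> - 1) * r powr \<alpha> * b t)"
      by (rule ennreal_leI)
    also have "\<dots> = ennreal (a t powr \<alpha> * b t powr (1 - \<alpha>)) + ennreal ((\<alpha> - 1) * r powr \<alpha> * b t)"
      using al b0[of t] a0[of t] r by (intro ennreal_plus) auto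
    finally show ?thesis .
  next
    case False
    hence "a t = 0" using ab a0[of t] by (metis less_eq_real_def)
    thus ?thesis by simp
  qed
  have "(\<integral>\<^sup>+ t. ennreal (\<alpha> * r powr (\<alpha> - 1) * a t) \<partial>count_space UNIV)
      \<le> (\<integral>\<^sup>+ t. ennreal (a t powr \<alpha> * b t powr (1 - \<alpha>)) + ennreal ((\<alpha> - 1) * r powr \<alpha> * b t) \<partial>count_space UNIV)"
    by (intro nn_integral_mono pt)
  also have "\<dots> = (\<integral>\<^sup>+ t. ennreal (a t powr \<alpha> * b t powr (1 - \<alpha>)) \<partial>count_space UNIV)
      + (\<integral>\<^sup>+ t. ennreal ((\<alpha> - 1) * r powr \<alpha> * b t) \<partial>count_space UNIV)"
    by (rule nn_integral_add) auto
  also have "(\<integral>\<^sup>+ t. ennreal ((\<alpha> - 1) * r powr \<alpha> * b t) \<partial>count_space UNIV)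
      = (\<integral>\<^sup>+ t. ennreal ((\<alpha> - 1) * r powr \<alpha>) * ennreal (b t) \<partial>count_space UNIV)"
    using al b0 by (intro nn_integral_cong) (simp add: ennreal_mult)
  also have "\<dots> = ennreal ((\<alpha> - 1) * r powr \<alpha>) * ennreal B"
    by (subst nn_integral_cmult) (auto simp: SB)
  also have "(\<integral>\<^sup>+ t. ennreal (\<alpha> * r powr (\<alpha> - 1) * a t) \<partial>count_space UNIV)
      = (\<integral>\<^sup>+ t. ennreal (\<alpha> * r powr (\<alpha> - 1)) * ennreal (a t) \<partial>count_space UNIV)"
    using al a0 by (intro nn_integral_cong) (simp add: ennreal_mult)
  also have "\<dots> = ennreal (\<alpha> * r powr (\<alpha> - 1)) * ennreal A"
    by (subst nn_integral_cmult) (auto simp: SA)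
  finally have ineq: "ennreal (\<alpha> * r powr (\<alpha> - 1)) * ennreal A
     \<le> (\<integral>\<^sup>+ t. ennreal (a t powr \<alpha> * b t powr (1 - \<alpha>)) \<partial>count_space UNIV)
      + ennreal ((\<alpha> - 1) * r powr \<alpha>) * ennreal B" .
  have e1: "(\<alpha> - 1) * r powr \<alpha> * B = (\<alpha> - 1) * X"
    using Apos Bpos by (simp add: r_def X_def powr_divide powr_diff field_simps)
  have e2: "\<alpha> * r powr (\<alpha> - 1) * A = \<alpha> * X"
    using Apos Bpos by (simp add: r_def X_def powr_divide powr_diff field_simps)
  have "ennreal ((\<alpha> - 1) * X) + ennreal X = ennreal (\<alpha> * X)"
    using al X0 mult_left_mono[of 1 \<alpha> X] by (subst ennreal_plus[symmetric]) (auto simp: algebra_simps)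
  also have "ennreal (\<alpha> * X) = ennreal (\<alpha> * r powr (\<alpha> - 1) * A)"
    by (simp only: e2)
  also have "\<dots> = ennreal (\<alpha> * r powr (\<alpha> - 1)) * ennreal A"
    using al r A0 by (simp add: ennreal_mult)
  also note ineq
  also have "ennreal ((\<alpha> - 1) * r powr \<alpha>) * ennreal B = ennreal ((\<alpha> - 1) * r powr \<alpha> * B)"
    using al r B0 by (simp add: ennreal_mult)
  also have "\<dots> = ennreal ((\<alpha> - 1) * X)"
    by (simp only: e1)
  finally have "ennreal ((\<alpha> - 1) * X) + ennreal X \<le> ennreal ((\<alpha> - 1) * X) +
      (\<integral>\<^sup>+ t. ennreal (a t powr \<alpha> * b t powr (1 - \<alpha>)) \<partial>count_space UNIV)"
    by (simp add: add.commute)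
  thus ?thesis unfolding X_def by (simp add: ennreal_add_left_cancel_le)
qed

lemma nn_restrict_count:
  fixes h :: "'x \<Rightarrow> ennreal"
  assumes "\<And>x. h x \<noteq> 0 \<Longrightarrow> x \<in> S"
  shows "(\<integral>\<^sup>+x. h x \<partial>count_space UNIV) = (\<integral>\<^sup>+x. h x \<partial>count_space S)"
proof -
  have "(\<integral>\<^sup>+x. h x \<partial>count_space S) = (\<integral>\<^sup>+x. h x * indicator S x \<partial>count_space UNIV)"
  proof (cases "S = UNIV")
    case True thus ?thesis by simp
  next
    case False
    have "NO_MATCH (UNIV::'x set) S" by simp
    thus ?thesis by (rule nn_integral_count_space_indicator)
  qed
  also have "\<dots> = (\<integral>\<^sup>+x. h x \<partial>count_space UNIV)"
    using assms by (intro nn_integral_cong) (auto simp: indicator_def)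
  finally show ?thesis by simp
qed

lemma nn_swap:
  fixes f :: "'x \<Rightarrow> 'y \<Rightarrow> ennreal"
  assumes S: "countable S" and T: "countable T" and nz: "\<And>x y. f x y \<noteq> 0 \<Longrightarrow> x \<in> S \<and> y \<in> T"
  shows "(\<integral>\<^sup>+x. \<integral>\<^sup>+y. f x y \<partial>count_space UNIV \<partial>count_space UNIV)
       = (\<integral>\<^sup>+y. \<integral>\<^sup>+x. f x y \<partial>count_space UNIV \<partial>count_space UNIV)"
proof -
  have i1: "(\<integral>\<^sup>+y. f x y \<partial>count_space UNIV) = (\<integral>\<^sup>+y. f x y \<partial>count_space T)" for x
    using nz by (intro nn_restrict_count) blast
  have i2: "(\<integral>\<^sup>+x. f x y \<partial>count_space UNIV) = (\<integral>\<^sup>+x. f x y \<partial>count_space S)" for y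
    using nz by (intro nn_restrict_count) blast
  have o1: "(\<integral>\<^sup>+x. \<integral>\<^sup>+y. f x y \<partial>count_space T \<partial>count_space UNIV)
      = (\<integral>\<^sup>+x. \<integral>\<^sup>+y. f x y \<partial>count_space T \<partial>count_space S)"
  proof (rule nn_restrict_count)
    fix x assume ne: "(\<integral>\<^sup>+y. f x y \<partial>count_space T) \<noteq> 0"
    show "x \<in> S"
    proof (rule ccontr)
      assume "x \<notin> S" hence "\<And>y. f x y = 0" using nz by blast
      thus False using ne by simp
    qed
  qed
  have o2: "(\<integral>\<^sup>+y. \<integral>\<^sup>+x. f x y \<partial>count_space S \<partial>count_space UNIV)
      = (\<integral>\<^sup>+y. \<integral>\<^sup>+x. f x y \<partial>count_space S \<partial>count_space T)"
  proof (rule nn_restrict_count)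
    fix y assume ne: "(\<integral>\<^sup>+x. f x y \<partial>count_space S) \<noteq> 0"
    show "y \<in> T"
    proof (rule ccontr)
      assume "y \<notin> T" hence "\<And>x. f x y = 0" using nz by blast
      thus False using ne by simp
    qed
  qed
  have "(\<integral>\<^sup>+y. \<integral>\<^sup>+x. f x y \<partial>count_space S \<partial>count_space T)
      = (\<integral>\<^sup>+x. \<integral>\<^sup>+y. f x y \<partial>count_space T \<partial>count_space S)"
    using S by (rule nn_integral_count_space_nn_integral) simp
  thus ?thesis by (simp add: i1 i2 o1 o2)
qed

lemma ennreal_pmf_bind_count:
  "ennreal (pmf (bind_pmf A K) z) = (\<integral>\<^sup>+ t. ennreal (pmf A t * pmf (K t) z) \<partial>count_space UNIV)"
  by (simp add: ennreal_pmf_bind nn_integral_measure_pmf ennreal_mult)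

lemma R_bind_le:
  fixes A A' :: "'t pmf" and K K' :: "'t \<Rightarrow> 'z pmf"
  assumes al: "\<alpha> > 1" and sA: "set_pmf A \<subseteq> set_pmf A'"
    and sK: "\<And>t. t \<in> set_pmf A \<Longrightarrow> set_pmf (K t) \<subseteq> set_pmf (K' t)"
    and RK: "\<And>t. t \<in> set_pmf A \<Longrightarrow> R \<alpha> (K t) (K' t) \<le> ennreal B2"
  shows "R \<alpha> (bind_pmf A K) (bind_pmf A' K') \<le> R \<alpha> A A' * ennreal B2"
proof -
  define c where "c t = pmf A t powr \<alpha> * pmf A' t powr (1 - \<alpha>)" for t
  define d where "d t z = pmf (K t) z powr \<alpha> * pmf (K' t) z powr (1 - \<alpha>)" for t z
  have pt: "ennreal (pmf (bind_pmf A K) z powr \<alpha> * pmf (bind_pmf A' K') z powr (1 - \<alpha>))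
      \<le> (\<integral>\<^sup>+ t. ennreal (c t * d t z) \<partial>count_space UNIV)" for z
  proof -
    have "ennreal (pmf (bind_pmf A K) z powr \<alpha> * pmf (bind_pmf A' K') z powr (1 - \<alpha>))
      \<le> (\<integral>\<^sup>+ t. ennreal ((pmf A t * pmf (K t) z) powr \<alpha> * (pmf A' t * pmf (K' t) z) powr (1 - \<alpha>)) \<partial>count_space UNIV)"
    proof (rule holder_sum[OF al])
      fix t assume "pmf A t * pmf (K t) z > 0"
      hence "t \<in> set_pmf A" "z \<in> set_pmf (K t)"
        by (auto simp: set_pmf_iff zero_less_mult_iff)
      hence "t \<in> set_pmf A'" "z \<in> set_pmf (K' t)" using sA sK by auto
      thus "pmf A' t * pmf (K' t) z > 0" by (simp add: set_pmf_iff)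
    qed (auto simp: ennreal_pmf_bind_count[symmetric])
    also have "\<dots> = (\<integral>\<^sup>+ t. ennreal (c t * d t z) \<partial>count_space UNIV)"
      by (intro nn_integral_cong) (simp add: c_def d_def powr_mult mult_ac)
    finally show ?thesis .
  qed
  have "R \<alpha> (bind_pmf A K) (bind_pmf A' K')
      \<le> (\<integral>\<^sup>+ z. \<integral>\<^sup>+ t. ennreal (c t * d t z) \<partial>count_space UNIV \<partial>count_space UNIV)"
    unfolding R_def by (intro nn_integral_mono pt)
  also have "\<dots> = (\<integral>\<^sup>+ t. \<integral>\<^sup>+ z. ennreal (c t * d t z) \<partial>count_space UNIV \<partial>count_space UNIV)"
  proof (rule nn_swap[where S = "set_pmf (bind_pmf A K)" and T = "set_pmf A"])
    fix z t assume "ennreal (c t * d t z) \<noteq> 0"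
    hence "c t \<noteq> 0" "d t z \<noteq> 0" by auto
    hence "t \<in> set_pmf A" "z \<in> set_pmf (K t)" by (auto simp: c_def d_def set_pmf_iff)
    thus "z \<in> set_pmf (bind_pmf A K) \<and> t \<in> set_pmf A" by auto
  qed auto
  also have "\<dots> = (\<integral>\<^sup>+ t. ennreal (c t) * R \<alpha> (K t) (K' t) \<partial>count_space UNIV)"
    unfolding R_def d_def[symmetric]
  proof (intro nn_integral_cong)
    fix t
    have "(\<integral>\<^sup>+ z. ennreal (c t * d t z) \<partial>count_space UNIV) = (\<integral>\<^sup>+ z. ennreal (c t) * ennreal (d t z) \<partial>count_space UNIV)"
      by (intro nn_integral_cong) (simp add: ennreal_mult c_def d_def)
    also have "\<dots> = ennreal (c t) * (\<integral>\<^sup>+ z. ennreal (d t z) \<partial>count_space UNIV)"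
      by (simp add: nn_integral_cmult)
    finally show "(\<integral>\<^sup>+ z. ennreal (c t * d t z) \<partial>count_space UNIV) = ennreal (c t) * (\<integral>\<^sup>+ z. ennreal (d t z) \<partial>count_space UNIV)" .
  qed
  also have "\<dots> \<le> (\<integral>\<^sup>+ t. ennreal (c t) * ennreal B2 \<partial>count_space UNIV)"
  proof (intro nn_integral_mono)
    fix t show "ennreal (c t) * R \<alpha> (K t) (K' t) \<le> ennreal (c t) * ennreal B2"
    proof (cases "t \<in> set_pmf A")
      case True thus ?thesis using RK by (intro mult_left_mono) auto
    next
      case False thus ?thesis by (simp add: c_def set_pmf_iff)
    qed
  qed
  also have "\<dots> = R \<alpha> A A' * ennreal B2"
    unfolding R_def c_def by (simp add: nn_integral_multc)
  finally show ?thesis .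
qed

lemma rb_bind:
  fixes A A' :: "'t pmf" and K K' :: "'t \<Rightarrow> 'z pmf"
  assumes al: "\<alpha> > 1" and A: "rb \<alpha> A A' B1" and B1: "B1 \<ge> 0" and B2: "B2 \<ge> 0"
    and K: "\<And>t. t \<in> set_pmf A \<Longrightarrow> rb \<alpha> (K t) (K' t) B2"
  shows "rb \<alpha> (bind_pmf A K) (bind_pmf A' K') (B1 * B2)"
  unfolding rb_def
proof
  show "set_pmf (bind_pmf A K) \<subseteq> set_pmf (bind_pmf A' K')"
    using A K unfolding rb_def by auto
  have "R \<alpha> (bind_pmf A K) (bind_pmf A' K') \<le> R \<alpha> A A' * ennreal B2"
    using A K al by (intro R_bind_le) (auto simp: rb_def)
  also have "\<dots> \<le> ennreal B1 * ennreal B2"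
    using A by (intro mult_right_mono) (auto simp: rb_def)
  also have "\<dots> = ennreal (B1 * B2)" using B1 B2 by (simp add: ennreal_mult)
  finally show "R \<alpha> (bind_pmf A K) (bind_pmf A' K') \<le> ennreal (B1 * B2)" .
qed

lemma R_return: "R \<alpha> (return_pmf x) (return_pmf x) = 1"
proof -
  have "R \<alpha> (return_pmf x) (return_pmf x) = (\<integral>\<^sup>+ y. indicator {x} y \<partial>count_space UNIV)"
    unfolding R_def by (intro nn_integral_cong) (auto simp: pmf_return indicator_def)
  also have "\<dots> = 1" by simp
  finally show ?thesis .
qed

lemma rb_return: "rb \<alpha> (return_pmf x) (return_pmf x) 1"
  by (simp add: rb_def R_return)

lemma rb_mono: "rb \<alpha> P Q B \<Longrightarrow> B \<le> B' \<Longrightarrow> rb \<alpha> P Q B'"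
  unfolding rb_def using ennreal_leI order_trans by blast

lemma rb_map:
  assumes "\<alpha> > 1" "rb \<alpha> P Q B" "B \<ge> 0"
  shows "rb \<alpha> (map_pmf f P) (map_pmf f Q) B"
proof -
  have "rb \<alpha> (bind_pmf P (\<lambda>x. return_pmf (f x))) (bind_pmf Q (\<lambda>x. return_pmf (f x))) (B * 1)"
    using assms by (intro rb_bind rb_return) auto
  thus ?thesis by (simp add: map_pmf_def)
qed

lemma rb_pair:
  assumes al: "\<alpha> > 1" and "rb \<alpha> A A' B1" "rb \<alpha> C C' B2" "B1 \<ge> 0" "B2 \<ge> 0"
  shows "rb \<alpha> (pair_pmf A C) (pair_pmf A' C') (B1 * B2)"
  unfolding pair_pmf_def
proof (rule rb_bind[OF al])
  fix x
  have "rb \<alpha> (bind_pmf C (\<lambda>y. return_pmf (x, y))) (bind_pmf C' (\<lambda>y. return_pmf (x, y))) (B2 * 1)"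
    using assms by (intro rb_bind rb_return) auto
  thus "rb \<alpha> (bind_pmf C (\<lambda>y. return_pmf (x, y))) (bind_pmf C' (\<lambda>y. return_pmf (x, y))) B2" by simp
qed (use assms in auto)

lemma rb_Pi:
  assumes al: "\<alpha> > 1" and fin: "finite S"
    and rbs: "\<And>s. s \<in> S \<Longrightarrow> rb \<alpha> (p s) (q s) (B s)" and B0: "\<And>s. s \<in> S \<Longrightarrow> B s \<ge> 0"
  shows "rb \<alpha> (Pi_pmf S d p) (Pi_pmf S d q) (\<Prod>s\<in>S. B s)"
  using fin rbs B0
proof (induction S rule: finite_induct)
  case empty thus ?case by (simp add: rb_return)
next
  case (insert x F)
  have "rb \<alpha> (map_pmf (\<lambda>(y,f). f(x:=y)) (pair_pmf (p x) (Pi_pmf F d p)))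
             (map_pmf (\<lambda>(y,f). f(x:=y)) (pair_pmf (q x) (Pi_pmf F d q))) (B x * (\<Prod>s\<in>F. B s))"
    using insert al by (intro rb_map rb_pair) (auto intro!: mult_nonneg_nonneg prod_nonneg)
  thus ?case using insert by (simp add: Pi_pmf_insert)
qed

lemma rb_final:
  assumes al: "\<alpha> > 1" and rb: "rb \<alpha> P Q (exp ((\<alpha> - 1) * \<epsilon>))" and e0: "\<epsilon> \<ge> 0"
  shows "renyi_div \<alpha> P Q \<le> ereal \<epsilon>"
proof -
  have sub: "set_pmf P \<subseteq> set_pmf Q" using rb by (simp add: rb_def)
  define S where "S = (\<integral>\<^sup>+ y. ennreal ((pmf P y / pmf Q y) powr (\<alpha> - 1)) \<partial>measure_pmf P)"
  have "S = (\<integral>\<^sup>+ y. ennreal (pmf P y) * ennreal ((pmf P y / pmf Q y) powr (\<alpha> - 1)) \<partial>count_space UNIV)"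
    unfolding S_def by (simp add: nn_integral_measure_pmf)
  also have "\<dots> = R \<alpha> P Q"
    unfolding R_def
  proof (intro nn_integral_cong)
    fix y
    show "ennreal (pmf P y) * ennreal ((pmf P y / pmf Q y) powr (\<alpha> - 1)) =
          ennreal (pmf P y powr \<alpha> * pmf Q y powr (1 - \<alpha>))"
    proof (cases "pmf P y = 0")
      case True thus ?thesis by simp
    next
      case False
      hence p: "pmf P y > 0" using pmf_nonneg[of P y] by linarith
      hence "y \<in> set_pmf P" by (simp add: set_pmf_iff)
      hence "y \<in> set_pmf Q" using sub by auto
      hence q: "pmf Q y > 0" by (simp add: pmf_positive)
      have "pmf P y * (pmf P y / pmf Q y) powr (\<alpha> - 1) = pmf P y powr \<alpha> * pmf Q y powr (1 - \<alpha>)"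
        using p q by (simp add: powr_divide powr_diff field_simps powr_add[symmetric] powr_minus_divide)
      thus ?thesis using p q by (simp add: ennreal_mult[symmetric])
    qed
  qed
  finally have SR: "S = R \<alpha> P Q" .
  have Sle: "S \<le> ennreal (exp ((\<alpha> - 1) * \<epsilon>))" using rb SR by (simp add: rb_def)
  hence Sfin: "S \<noteq> \<top>" by (auto simp: top_unique)
  have le: "enn2real S \<le> exp ((\<alpha> - 1) * \<epsilon>)" using Sle by (simp add: enn2real_leI)
  have "ln (enn2real S) / (\<alpha> - 1) \<le> \<epsilon>"
  proof (cases "enn2real S > 0")
    case True
    hence "ln (enn2real S) \<le> (\<alpha> - 1) * \<epsilon>" using le
      by (metis ln_exp ln_le_cancel_iff exp_gt_zero)
    thus ?thesis using al by (simp add: divide_le_eq mult.commute)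
  next
    case False
    hence "enn2real S = 0" using enn2real_nonneg[of S] by linarith
    thus ?thesis using e0 by simp
  qed
  thus ?thesis unfolding renyi_div_def using sub Sfin by (simp add: S_def Let_def)
qed

lemma meas_count_int:
  fixes f :: "int \<Rightarrow> 'a \<Rightarrow> ennreal"
  assumes [measurable]: "\<And>n. f n \<in> borel_measurable M"
  shows "(\<lambda>s. \<integral>\<^sup>+ n. f n s \<partial>count_space UNIV) \<in> borel_measurable M"
proof -
  have bij: "bij_betw (from_nat_into (UNIV::int set)) UNIV UNIV"
    by (rule bij_betw_from_nat_into) (auto simp: infinite_UNIV_int)
  have "(\<lambda>s. \<integral>\<^sup>+ n. f n s \<partial>count_space UNIV) = (\<lambda>s. \<Sum>k. f (from_nat_into UNIV k) s)"
    by (subst nn_integral_bij_count_space[symmetric, OF bij]) (simp add: nn_integral_count_space_nat)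
  moreover have "(\<lambda>s. \<Sum>k. f (from_nat_into UNIV k) s) \<in> borel_measurable M"
    by measurable
  ultimately show ?thesis by simp
qed

lemma fold_int:
  fixes \<phi> :: "real \<Rightarrow> ennreal"
  assumes [measurable]: "\<phi> \<in> borel_measurable borel"
  shows "(\<integral>\<^sup>+ t. \<phi> t \<partial>lborel)
       = (\<integral>\<^sup>+ n. \<integral>\<^sup>+ s. indicator {0..<1} s * \<phi> (s + real_of_int (n::int)) \<partial>lborel \<partial>count_space UNIV)"
proof -
  have pt: "\<phi> t = (\<integral>\<^sup>+ n. indicator {0..<1} (t - real_of_int (n::int)) * \<phi> t \<partial>count_space UNIV)" for t
  proof -
    have "(\<integral>\<^sup>+ n. indicator {0..<1} (t - real_of_int (n::int)) * \<phi> t \<partial>count_space UNIV)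
        = (\<integral>\<^sup>+ n. \<phi> t * indicator {\<lfloor>t\<rfloor>} n \<partial>count_space UNIV)"
    proof (intro nn_integral_cong)
      fix n :: int
      have "(0 \<le> t - real_of_int n \<and> t - real_of_int n < 1) \<longleftrightarrow> (of_int n \<le> t \<and> t < of_int n + 1)"
        by auto
      also have "\<dots> \<longleftrightarrow> \<lfloor>t\<rfloor> = n" by (simp add: floor_eq_iff)
      finally have "(0 \<le> t - real_of_int n \<and> t - real_of_int n < 1) \<longleftrightarrow> n = \<lfloor>t\<rfloor>" by auto
      thus "indicator {0..<1} (t - real_of_int n) * \<phi> t = \<phi> t * indicator {\<lfloor>t\<rfloor>} n"
        by (auto simp: indicator_def)
    qed
    also have "\<dots> = \<phi> t" by (simp add: nn_integral_cmult_indicator)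
    finally show ?thesis by simp
  qed
  have "(\<integral>\<^sup>+ t. \<phi> t \<partial>lborel)
      = (\<integral>\<^sup>+ t. \<integral>\<^sup>+ n. indicator {0..<1} (t - real_of_int (n::int)) * \<phi> t \<partial>count_space UNIV \<partial>lborel)"
    by (intro nn_integral_cong) (rule pt)
  also have "\<dots> = (\<integral>\<^sup>+ n. \<integral>\<^sup>+ t. indicator {0..<1} (t - real_of_int (n::int)) * \<phi> t \<partial>lborel \<partial>count_space UNIV)"
    by (rule nn_integral_count_space_nn_integral) auto
  also have "\<dots> = (\<integral>\<^sup>+ n. \<integral>\<^sup>+ s. indicator {0..<1} s * \<phi> (s + real_of_int (n::int)) \<partial>lborel \<partial>count_space UNIV)"
  proof (rule nn_integral_cong)
    fix n :: int
    have "(\<integral>\<^sup>+ t. indicator {0..<1} (t - real_of_int n) * \<phi> t \<partial>lborel)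
       = ennreal \<bar>1\<bar> * (\<integral>\<^sup>+ s. indicator {0..<1} (real_of_int n + 1 * s - real_of_int n) * \<phi> (real_of_int n + 1 * s) \<partial>lborel)"
      by (rule nn_integral_real_affine) auto
    thus "(\<integral>\<^sup>+ t. indicator {0..<1} (t - real_of_int n) * \<phi> t \<partial>lborel)
       = (\<integral>\<^sup>+ s. indicator {0..<1} s * \<phi> (s + real_of_int n) \<partial>lborel)"
      by (simp add: add.commute)
  qed
  finally show ?thesis .
qed

lemma gauss_pair:
  fixes a p d :: real
  assumes a: "a > 0"
  shows "(\<integral>\<^sup>+ t. ennreal (exp (-2*a*(t+p)\<^sup>2)) * ennreal (exp (-2*a*(t+p+d)\<^sup>2)) \<partial>lborel)
       = ennreal (sqrt (pi / (4*a))) * ennreal (exp (-a*d\<^sup>2))"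
proof -
  define \<sigma> where "\<sigma> = sqrt (1/(8*a))"
  have s0: "\<sigma> > 0" using a by (simp add: \<sigma>_def)
  have s2: "\<sigma>\<^sup>2 = 1/(8*a)" using a by (simp add: \<sigma>_def)
  define \<mu> where "\<mu> = -(p + d/2)"
  define C where "C = sqrt (pi / (4*a))"
  have C0: "C > 0" using a by (simp add: C_def)
  have "2 * pi * \<sigma>\<^sup>2 = pi / (4*a)" using s2 by simp
  hence e1: "sqrt (2 * pi * \<sigma>\<^sup>2) = C" by (simp add: C_def)
  have e2: "-(t - \<mu>)\<^sup>2/(2*\<sigma>\<^sup>2) = -4*a*(t+p+d/2)\<^sup>2" for t
  proof -
    have "2*\<sigma>\<^sup>2 = 1/(4*a)" using s2 by simp
    moreover have "(t - \<mu>)\<^sup>2 = (t+p+d/2)\<^sup>2" by (simp add: \<mu>_def algebra_simps)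
    ultimately show ?thesis using a by simp
  qed
  have nd: "normal_density \<mu> \<sigma> t = 1 / C * exp (-4*a*(t+p+d/2)\<^sup>2)" for t
    unfolding normal_density_def e1 e2 by simp
  have pt: "ennreal (exp (-2*a*(t+p)\<^sup>2)) * ennreal (exp (-2*a*(t+p+d)\<^sup>2))
       = ennreal (C * exp (-a*d\<^sup>2)) * ennreal (normal_density \<mu> \<sigma> t)" for t
  proof -
    have "exp (-2*a*(t+p)\<^sup>2) * exp (-2*a*(t+p+d)\<^sup>2) = exp (-a*d\<^sup>2) * exp (-4*a*(t+p+d/2)\<^sup>2)"
      by (simp add: exp_add[symmetric] power2_eq_square algebra_simps)
    also have "\<dots> = C * exp (-a*d\<^sup>2) * normal_density \<mu> \<sigma> t"
      using C0 by (simp add: nd)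
    finally show ?thesis using C0 by (simp add: ennreal_mult[symmetric])
  qed
  have "(\<integral>\<^sup>+ t. ennreal (exp (-2*a*(t+p)\<^sup>2)) * ennreal (exp (-2*a*(t+p+d)\<^sup>2)) \<partial>lborel)
      = (\<integral>\<^sup>+ t. ennreal (C * exp (-a*d\<^sup>2)) * ennreal (normal_density \<mu> \<sigma> t) \<partial>lborel)"
    by (intro nn_integral_cong) (rule pt)
  also have "\<dots> = ennreal (C * exp (-a*d\<^sup>2)) * (\<integral>\<^sup>+ t. ennreal (normal_density \<mu> \<sigma> t) \<partial>lborel)"
    by (subst nn_integral_cmult) auto
  also have "(\<integral>\<^sup>+ t. ennreal (normal_density \<mu> \<sigma> t) \<partial>lborel) = 1"
    using s0 by (subst nn_integral_eq_integral) (auto simp: integrable_normal_density integral_normal_density)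
  finally show ?thesis using C0 by (simp add: C_def ennreal_mult)
qed

lemma ennreal_amgm: "2 * (x * y) \<le> x * x + y * (y::ennreal)"
proof (cases x rule: ennreal_cases)
  case (real u)
  show ?thesis
  proof (cases y rule: ennreal_cases)
    case (real v)
    have "2 * (u * v) \<le> u * u + v * v" using zero_le_square[of "u - v"] by (simp add: algebra_simps)
    hence "ennreal (2 * (u * v)) \<le> ennreal (u * u + v * v)" by (rule ennreal_leI)
    thus ?thesis using \<open>x = ennreal u\<close> \<open>y = ennreal v\<close> \<open>u \<ge> 0\<close> \<open>v \<ge> 0\<close>
      by (simp add: ennreal_mult ennreal_plus[symmetric])
  next
    case top thus ?thesis by (simp add: ennreal_top_mult)
  qed
next
  case top thus ?thesis by (simp add: ennreal_top_mult)
qed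

lemma theta_le:
  fixes a c :: real
  assumes a: "a > 0"
  shows "(\<integral>\<^sup>+ x. ennreal (exp (-a*(real_of_int (x::int) - c)\<^sup>2)) \<partial>count_space UNIV)
       \<le> (\<integral>\<^sup>+ x. ennreal (exp (-a*(real_of_int (x::int) - 0)\<^sup>2)) \<partial>count_space UNIV)"
proof -
  define g where "g u = ennreal (exp (-2*a*u\<^sup>2))" for u
  define G where "G p s = (\<integral>\<^sup>+ n. g (s + real_of_int (n::int) + p) \<partial>count_space UNIV)" for p s
  define K where "K = sqrt (pi / (4*a))"
  define \<theta> where "\<theta> c = (\<integral>\<^sup>+ x. ennreal (exp (-a*(real_of_int (x::int) - c)\<^sup>2)) \<partial>count_space UNIV)" for c
  have gm[measurable]: "g \<in> borel_measurable borel" unfolding g_def by measurable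
  have Gm[measurable]: "G p \<in> borel_measurable borel" for p
    unfolding G_def by (intro meas_count_int) measurable
  have key: "(\<integral>\<^sup>+ s. indicator {0..<1::real} s * (G p s * G q s) \<partial>lborel) = ennreal K * \<theta> (p - q)" for p q
  proof -
    define H where "H n x s = indicator {0..<1::real} s * g (s + real_of_int (n::int) + p) * g (s + real_of_int (n + (x::int)) + q)" for n x s
    have Hm[measurable]: "H n x \<in> borel_measurable borel" for n x unfolding H_def by measurable
    have s1: "indicator {0..<1::real} s * (G p s * G q s) = (\<integral>\<^sup>+ n. \<integral>\<^sup>+ x. H n x s \<partial>count_space UNIV \<partial>count_space UNIV)" for s
    proof -
      have "indicator {0..<1::real} s * (G p s * G q s)
          = (\<integral>\<^sup>+ n. indicator {0..<1::real} s * g (s + real_of_int (n::int) + p) * G q s \<partial>count_space UNIV)"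
        unfolding G_def[of p] by (simp add: nn_integral_cmult[symmetric] nn_integral_multc[symmetric] mult.assoc)
      also have "\<dots> = (\<integral>\<^sup>+ n. \<integral>\<^sup>+ m. indicator {0..<1::real} s * g (s + real_of_int (n::int) + p) * g (s + real_of_int (m::int) + q) \<partial>count_space UNIV \<partial>count_space UNIV)"
        unfolding G_def[of q] by (simp add: nn_integral_cmult[symmetric])
      also have "\<dots> = (\<integral>\<^sup>+ n. \<integral>\<^sup>+ x. H n x s \<partial>count_space UNIV \<partial>count_space UNIV)"
      proof (rule nn_integral_cong)
        fix n :: int
        have bij: "bij_betw (\<lambda>x. n + x) (UNIV::int set) UNIV"
          by (rule bij_betwI[where g="\<lambda>x. x - n"]) auto
        show "(\<integral>\<^sup>+ m. indicator {0..<1::real} s * g (s + real_of_int n + p) * g (s + real_of_int (m::int) + q) \<partial>count_space UNIV)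
            = (\<integral>\<^sup>+ x. H n x s \<partial>count_space UNIV)"
          unfolding H_def by (rule nn_integral_bij_count_space[OF bij, symmetric])
      qed
      finally show ?thesis .
    qed
    have "(\<integral>\<^sup>+ s. indicator {0..<1::real} s * (G p s * G q s) \<partial>lborel)
        = (\<integral>\<^sup>+ s. \<integral>\<^sup>+ n. \<integral>\<^sup>+ x. H n x s \<partial>count_space UNIV \<partial>count_space UNIV \<partial>lborel)"
      by (intro nn_integral_cong) (rule s1)
    also have "\<dots> = (\<integral>\<^sup>+ n. \<integral>\<^sup>+ s. \<integral>\<^sup>+ x. H n x s \<partial>count_space UNIV \<partial>lborel \<partial>count_space UNIV)"
      by (rule nn_integral_count_space_nn_integral) (auto intro!: meas_count_int)
    also have "\<dots> = (\<integral>\<^sup>+ n. \<integral>\<^sup>+ x. \<integral>\<^sup>+ s. H n x s \<partial>lborel \<partial>count_space UNIV \<partial>count_space UNIV)"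
      by (rule nn_integral_cong) (rule nn_integral_count_space_nn_integral, auto)
    also have "\<dots> = (\<integral>\<^sup>+ x. \<integral>\<^sup>+ n. \<integral>\<^sup>+ s. H n x s \<partial>lborel \<partial>count_space UNIV \<partial>count_space UNIV)"
      by (rule nn_integral_count_space_nn_integral[symmetric]) auto
    also have "\<dots> = (\<integral>\<^sup>+ x. ennreal K * ennreal (exp (-a*(real_of_int (x::int) - (p - q))\<^sup>2)) \<partial>count_space UNIV)"
    proof (rule nn_integral_cong)
      fix x :: int
      define d where "d = real_of_int x + q - p"
      define \<phi> where "\<phi> t = g (t + p) * g (t + p + d)" for t
      have \<phi>m[measurable]: "\<phi> \<in> borel_measurable borel" unfolding \<phi>_def by measurable
      have "(\<integral>\<^sup>+ n. \<integral>\<^sup>+ s. H n x s \<partial>lborel \<partial>count_space UNIV)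
          = (\<integral>\<^sup>+ n. \<integral>\<^sup>+ s. indicator {0..<1} s * \<phi> (s + real_of_int (n::int)) \<partial>lborel \<partial>count_space UNIV)"
        unfolding H_def \<phi>_def d_def by (intro nn_integral_cong) (simp add: mult.assoc algebra_simps)
      also have "\<dots> = (\<integral>\<^sup>+ t. \<phi> t \<partial>lborel)"
        by (rule fold_int[symmetric]) simp
      also have "\<dots> = ennreal K * ennreal (exp (-a*d\<^sup>2))"
        unfolding \<phi>_def g_def K_def by (rule gauss_pair[OF a])
      also have "d\<^sup>2 = (real_of_int x - (p - q))\<^sup>2" by (simp add: d_def algebra_simps)
      finally show "(\<integral>\<^sup>+ n. \<integral>\<^sup>+ s. H n x s \<partial>lborel \<partial>count_space UNIV)
          = ennreal K * ennreal (exp (-a*(real_of_int x - (p - q))\<^sup>2))" .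
    qed
    also have "\<dots> = ennreal K * \<theta> (p - q)"
      unfolding \<theta>_def by (simp add: nn_integral_cmult)
    finally show ?thesis .
  qed
  have K0: "K > 0" using a by (simp add: K_def)
  have "2 * (ennreal K * \<theta> c) = 2 * (\<integral>\<^sup>+ s. indicator {0..<1::real} s * (G c s * G 0 s) \<partial>lborel)"
    using key[of c 0] by simp
  also have "\<dots> = (\<integral>\<^sup>+ s. 2 * (indicator {0..<1::real} s * (G c s * G 0 s)) \<partial>lborel)"
    by (subst nn_integral_cmult) auto
  also have "\<dots> \<le> (\<integral>\<^sup>+ s. indicator {0..<1::real} s * (G c s * G c s) + indicator {0..<1::real} s * (G 0 s * G 0 s) \<partial>lborel)"
  proof (rule nn_integral_mono)
    fix s
    have "indicator {0..<1::real} s * (2 * (G c s * G 0 s)) \<le> indicator {0..<1::real} s * (G c s * G c s + G 0 s * G 0 s)"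
      by (intro mult_left_mono ennreal_amgm) auto
    thus "2 * (indicator {0..<1::real} s * (G c s * G 0 s)) \<le> indicator {0..<1::real} s * (G c s * G c s) + indicator {0..<1::real} s * (G 0 s * G 0 s)"
      by (simp add: algebra_simps)
  qed
  also have "\<dots> = (\<integral>\<^sup>+ s. indicator {0..<1::real} s * (G c s * G c s) \<partial>lborel) + (\<integral>\<^sup>+ s. indicator {0..<1::real} s * (G 0 s * G 0 s) \<partial>lborel)"
    by (rule nn_integral_add) auto
  also have "\<dots> = 2 * (ennreal K * \<theta> 0)"
    using key[of c c] key[of 0 0] by (simp add: mult_2)
  finally have "ennreal (2 * K) * \<theta> c \<le> ennreal (2 * K) * \<theta> 0"
    using K0 by (simp add: ennreal_mult mult.assoc)
  hence "\<theta> c \<le> \<theta> 0" using K0 by (simp add: ennreal_mult_le_mult_iff)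
  thus ?thesis unfolding \<theta>_def .
qed

lemma int_decode_bound: "real k \<le> 2 * \<bar>real_of_int (int_decode k)\<bar> + 1"
  unfolding int_decode_def sum_decode_def
  by (cases "even k") (auto elim!: evenE oddE)

lemma int_sq_ge_abs: "\<bar>real_of_int (z::int)\<bar> \<le> (real_of_int z)\<^sup>2"
proof (cases "z = 0")
  case False
  hence "1 \<le> \<bar>z\<bar>" by linarith
  hence "\<bar>z\<bar> * 1 \<le> \<bar>z\<bar> * \<bar>z\<bar>" by (intro mult_left_mono) auto
  hence "\<bar>z\<bar> \<le> z * z" by (simp add: abs_mult_self_eq)
  hence "\<bar>real_of_int z\<bar> \<le> real_of_int (z * z)" by linarith
  thus ?thesis by (simp add: power2_eq_square)
qed simp

lemma gauss_int_finite:
  fixes \<rho> :: real assumes r: "\<rho> > 0"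
  shows "(\<integral>\<^sup>+ z. ennreal (exp (-\<rho>*(real_of_int (z::int) - 0)\<^sup>2)) \<partial>count_space UNIV) < \<infinity>"
proof -
  define q where "q = exp (-\<rho>/2)"
  have q: "0 < q" "q < 1" using r by (auto simp: q_def)
  have "(\<integral>\<^sup>+ z. ennreal (exp (-\<rho>*(real_of_int (z::int) - 0)\<^sup>2)) \<partial>count_space UNIV)
      = (\<integral>\<^sup>+ k. ennreal (exp (-\<rho>*(real_of_int (int_decode k))\<^sup>2)) \<partial>count_space UNIV)"
    by (subst nn_integral_bij_count_space[OF bij_int_decode, symmetric]) simp
  also have "\<dots> = (\<Sum>k. ennreal (exp (-\<rho>*(real_of_int (int_decode k))\<^sup>2)))"
    by (simp add: nn_integral_count_space_nat)
  also have "\<dots> \<le> (\<Sum>k. ennreal (exp (\<rho>/2) * q ^ k))"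
  proof (intro suminf_le ennreal_leI)
    fix k
    have "exp (-\<rho>*(real_of_int (int_decode k))\<^sup>2) \<le> exp (-\<rho> * \<bar>real_of_int (int_decode k)\<bar>)"
      using int_sq_ge_abs[of "int_decode k"] r by simp
    also have "\<dots> \<le> exp (-\<rho> * ((real k - 1)/2))"
    proof -
      have "\<rho> * real k \<le> \<rho> * (2 * \<bar>real_of_int (int_decode k)\<bar> + 1)"
        by (rule mult_left_mono) (use int_decode_bound[of k] r in auto)
      thus ?thesis by (simp add: field_simps)
    qed
    also have "\<dots> = exp (\<rho>/2) * q ^ k"
      by (simp add: q_def exp_of_nat_mult[symmetric] exp_add[symmetric] field_simps)
    finally show "exp (-\<rho>*(real_of_int (int_decode k))\<^sup>2) \<le> exp (\<rho>/2) * q ^ k" .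
  qed auto
  also have "\<dots> = ennreal (\<Sum>k. exp (\<rho>/2) * q ^ k)"
    using q by (intro suminf_ennreal2) (auto intro!: summable_mult summable_geometric)
  also have "\<dots> < \<infinity>" by simp
  finally show ?thesis .
qed

definition DGZ :: "real \<Rightarrow> real" where
  "DGZ \<rho> = infsum (\<lambda>z::int. exp (- (real_of_int z * real_of_int z) / (2 * (1 / (2 * \<rho>))))) UNIV"

lemma dg_exp_eq: "\<rho> > 0 \<Longrightarrow> exp (- (real_of_int z * real_of_int z) / (2 * (1 / (2 * \<rho>)))) = exp (-\<rho>*(real_of_int (z::int) - 0)\<^sup>2)"
  by (simp add: power2_eq_square field_simps)

lemma DGZ:
  fixes \<rho> :: real assumes r: "\<rho> > 0"
  shows "ennreal (DGZ \<rho>) = (\<integral>\<^sup>+ z. ennreal (exp (-\<rho>*(real_of_int (z::int) - 0)\<^sup>2)) \<partial>count_space UNIV)"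
    and "DGZ \<rho> \<ge> 1"
proof -
  define e where "e z = exp (-\<rho>*(real_of_int (z::int) - 0)\<^sup>2)" for z
  define E where "E = (\<integral>\<^sup>+ z. ennreal (e z) \<partial>count_space UNIV)"
  have Efin: "E < \<infinity>" unfolding E_def e_def using gauss_int_finite[OF r] .
  have "DGZ \<rho> = infsum e UNIV"
    unfolding DGZ_def e_def by (simp only: dg_exp_eq[OF r])
  also have "\<dots> = infsetsum e UNIV"
  proof (rule infsetsum_infsum[symmetric])
    show "Infinite_Set_Sum.abs_summable_on e UNIV" unfolding Infinite_Set_Sum.abs_summable_on_def
      by (rule integrableI_bounded) (use Efin in \<open>auto simp: E_def e_def\<close>)
  qed
  also have "\<dots> = enn2real E"
    unfolding E_def using Efin by (subst infsetsum_conv_nn_integral) (auto simp: E_def e_def)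
  finally have Z: "DGZ \<rho> = enn2real E" .
  thus "ennreal (DGZ \<rho>) = (\<integral>\<^sup>+ z. ennreal (exp (-\<rho>*(real_of_int (z::int) - 0)\<^sup>2)) \<partial>count_space UNIV)"
    using Efin by (simp add: E_def e_def)
  have "ennreal (e 0) \<le> E" unfolding E_def by (rule nn_point_le)
  hence "1 \<le> E" by (simp add: e_def)
  thus "DGZ \<rho> \<ge> 1" using Z Efin enn2real_mono[of 1 E] by simp
qed

lemma pmf_DG:
  fixes \<rho> :: real assumes r: "\<rho> > 0"
  shows "pmf (discrete_gaussian (1 / (2 * \<rho>))) z = exp (-\<rho>*(real_of_int z - 0)\<^sup>2) / DGZ \<rho>"
proof -
  have Z: "DGZ \<rho> \<ge> 1" using DGZ[OF r] by simp
  have eq: "(\<lambda>x::int. exp (- (real_of_int x * real_of_int x) / (2 * (1 / (2 * \<rho>)))) /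
      infsum (\<lambda>z::int. exp (- (real_of_int z * real_of_int z) / (2 * (1 / (2 * \<rho>))))) UNIV)
      = (\<lambda>x. exp (-\<rho>*(real_of_int x - 0)\<^sup>2) / DGZ \<rho>)"
    by (simp only: dg_exp_eq[OF r] DGZ_def)
  have "(\<integral>\<^sup>+ x. ennreal (exp (-\<rho>*(real_of_int (x::int) - 0)\<^sup>2) / DGZ \<rho>) \<partial>count_space UNIV)
      = (\<integral>\<^sup>+ x. ennreal (exp (-\<rho>*(real_of_int (x::int) - 0)\<^sup>2)) * ennreal (1 / DGZ \<rho>) \<partial>count_space UNIV)"
    using Z by (intro nn_integral_cong) (simp add: ennreal_mult[symmetric] divide_inverse)
  also have "\<dots> = ennreal (DGZ \<rho>) * ennreal (1 / DGZ \<rho>)"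
    using DGZ(1)[OF r] by (simp add: nn_integral_multc)
  also have "\<dots> = 1" using Z by (simp add: ennreal_mult[symmetric])
  finally have one: "(\<integral>\<^sup>+ x. ennreal (exp (-\<rho>*(real_of_int (x::int) - 0)\<^sup>2) / DGZ \<rho>) \<partial>count_space UNIV) = 1" .
  show ?thesis unfolding discrete_gaussian_def eq
    using Z one by (subst pmf_embed_pmf) auto
qed

lemma powr_exp_div:
  fixes Z u v \<alpha> :: real assumes Z: "Z > 0"
  shows "(exp u / Z) powr \<alpha> * (exp v / Z) powr (1 - \<alpha>) = exp (\<alpha> * u + (1 - \<alpha>) * v) / Z"
proof -
  have "(exp u / Z) powr \<alpha> * (exp v / Z) powr (1 - \<alpha>)
      = exp (u * \<alpha>) * exp (v * (1 - \<alpha>)) / (Z powr \<alpha> * Z powr (1 - \<alpha>))"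
    using Z by (simp add: powr_divide exp_powr_real)
  also have "Z powr \<alpha> * Z powr (1 - \<alpha>) = Z"
    using Z by (simp add: powr_add[symmetric])
  finally show ?thesis by (simp add: exp_add[symmetric] mult.commute)
qed

lemma pmf_DG_shift:
  fixes \<rho> :: real assumes r: "\<rho> > 0"
  shows "pmf (map_pmf (\<lambda>y. c + y) (discrete_gaussian (1 / (2 * \<rho>)))) z
       = exp (-\<rho>*(real_of_int z - real_of_int c)\<^sup>2) / DGZ \<rho>"
proof -
  have inj: "inj (\<lambda>y::int. c + y)" by (auto simp: inj_def)
  have "pmf (map_pmf (\<lambda>y. c + y) (discrete_gaussian (1 / (2 * \<rho>)))) (c + (z - c))
      = pmf (discrete_gaussian (1 / (2 * \<rho>))) (z - c)"
    by (rule pmf_map_inj'[OF inj])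
  thus ?thesis using pmf_DG[OF r, of "z - c"] by simp
qed

lemma dg_shift:
  fixes \<rho> \<alpha> :: real and a b :: int
  assumes al: "\<alpha> > 1" and r: "\<rho> > 0"
  shows "rb \<alpha> (map_pmf (\<lambda>y. a + y) (discrete_gaussian (1 / (2 * \<rho>))))
               (map_pmf (\<lambda>y. b + y) (discrete_gaussian (1 / (2 * \<rho>))))
               (exp ((\<alpha> - 1) * (\<alpha> * \<rho> * (real_of_int (a - b))\<^sup>2)))"
  unfolding rb_def
proof
  define Z where "Z = DGZ \<rho>"
  have Z: "Z \<ge> 1" using DGZ(2)[OF r] by (simp add: Z_def)
  show "set_pmf (map_pmf (\<lambda>y. a + y) (discrete_gaussian (1 / (2 * \<rho>))))
      \<subseteq> set_pmf (map_pmf (\<lambda>y. b + y) (discrete_gaussian (1 / (2 * \<rho>))))"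
  proof
    fix z
    have "pmf (map_pmf (\<lambda>y. b + y) (discrete_gaussian (1 / (2 * \<rho>)))) z > 0"
      using Z by (simp add: pmf_DG_shift[OF r] Z_def)
    thus "z \<in> set_pmf (map_pmf (\<lambda>y. b + y) (discrete_gaussian (1 / (2 * \<rho>))))"
      by (subst set_pmf_iff) linarith
  qed
  define \<Delta> where "\<Delta> = real_of_int (a - b)"
  define c' where "c' = real_of_int a - (1 - \<alpha>) * \<Delta>"
  define M where "M = exp (\<rho> * \<alpha> * (\<alpha> - 1) * \<Delta>\<^sup>2)"
  have "R \<alpha> (map_pmf (\<lambda>y. a + y) (discrete_gaussian (1 / (2 * \<rho>))))
               (map_pmf (\<lambda>y. b + y) (discrete_gaussian (1 / (2 * \<rho>))))
      = (\<integral>\<^sup>+ z. ennreal (exp (-\<rho>*(real_of_int (z::int) - c')\<^sup>2)) * ennreal (M / Z) \<partial>count_space UNIV)"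
    unfolding R_def
  proof (rule nn_integral_cong)
    fix z :: int
    have "(exp (-\<rho>*(real_of_int z - real_of_int a)\<^sup>2) / Z) powr \<alpha> * (exp (-\<rho>*(real_of_int z - real_of_int b)\<^sup>2) / Z) powr (1 - \<alpha>)
        = exp (\<alpha>*(-\<rho>*(real_of_int z - real_of_int a)\<^sup>2) + (1-\<alpha>)*(-\<rho>*(real_of_int z - real_of_int b)\<^sup>2)) / Z"
      using Z by (intro powr_exp_div) auto
    also have "\<alpha>*(-\<rho>*(real_of_int z - real_of_int a)\<^sup>2) + (1-\<alpha>)*(-\<rho>*(real_of_int z - real_of_int b)\<^sup>2)
        = -\<rho>*(real_of_int z - c')\<^sup>2 + \<rho> * \<alpha> * (\<alpha> - 1) * \<Delta>\<^sup>2"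
      by (simp add: c'_def \<Delta>_def power2_eq_square algebra_simps)
    also have "exp (-\<rho>*(real_of_int z - c')\<^sup>2 + \<rho> * \<alpha> * (\<alpha> - 1) * \<Delta>\<^sup>2) / Z
        = exp (-\<rho>*(real_of_int z - c')\<^sup>2) * (M / Z)"
      by (simp add: M_def mult_exp_exp algebra_simps)
    finally show "ennreal (pmf (map_pmf (\<lambda>y. a + y) (discrete_gaussian (1 / (2 * \<rho>)))) z powr \<alpha> *
          pmf (map_pmf (\<lambda>y. b + y) (discrete_gaussian (1 / (2 * \<rho>)))) z powr (1 - \<alpha>))
        = ennreal (exp (-\<rho>*(real_of_int z - c')\<^sup>2)) * ennreal (M / Z)"
      using Z by (simp add: pmf_DG_shift[OF r] Z_def[symmetric] ennreal_mult[symmetric] M_def)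
  qed
  also have "\<dots> = (\<integral>\<^sup>+ z. ennreal (exp (-\<rho>*(real_of_int (z::int) - c')\<^sup>2)) \<partial>count_space UNIV) * ennreal (M / Z)"
    by (simp add: nn_integral_multc)
  also have "\<dots> \<le> (\<integral>\<^sup>+ z. ennreal (exp (-\<rho>*(real_of_int (z::int) - 0)\<^sup>2)) \<partial>count_space UNIV) * ennreal (M / Z)"
    by (intro mult_right_mono theta_le r) auto
  also have "\<dots> = ennreal Z * ennreal (M / Z)"
    using DGZ(1)[OF r] by (simp add: Z_def)
  also have "\<dots> = ennreal M" using Z by (simp add: ennreal_mult[symmetric] M_def)
  also have "M = exp ((\<alpha> - 1) * (\<alpha> * \<rho> * (real_of_int (a - b))\<^sup>2))"
    by (simp add: M_def \<Delta>_def algebra_simps)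
  finally show "R \<alpha> (map_pmf (\<lambda>y. a + y) (discrete_gaussian (1 / (2 * \<rho>))))
               (map_pmf (\<lambda>y. b + y) (discrete_gaussian (1 / (2 * \<rho>))))
      \<le> ennreal (exp ((\<alpha> - 1) * (\<alpha> * \<rho> * (real_of_int (a - b))\<^sup>2)))" .
qed

definition sqd :: "int list \<Rightarrow> int list \<Rightarrow> int" where
  "sqd xs ys = sum_list (map (\<lambda>(x,y). (x - y)\<^sup>2) (zip xs ys))"

lemma sqd_Nil[simp]: "sqd [] [] = 0" by (simp add: sqd_def)
lemma sqd_Cons[simp]: "sqd (x # xs) (y # ys) = (x - y)\<^sup>2 + sqd xs ys" by (simp add: sqd_def)

lemma nc_rb:
  fixes \<rho> \<alpha> :: real
  assumes al: "\<alpha> > 1" and r: "\<rho> > 0"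
  shows "length as = length bs \<Longrightarrow>
    rb \<alpha> (noisy_count as \<rho>) (noisy_count bs \<rho>) (exp ((\<alpha> - 1) * (\<alpha> * \<rho> * real_of_int (sqd as bs))))"
proof (induction as arbitrary: bs)
  case Nil thus ?case by (simp add: rb_return)
next
  case (Cons a as)
  then obtain b bs' where bs: "bs = b # bs'" and len: "length as = length bs'"
    by (cases bs) auto
  have eq: "noisy_count (c # cs) \<rho> = bind_pmf (map_pmf (\<lambda>y. c + y) (discrete_gaussian (1 / (2 * \<rho>))))
      (\<lambda>w. map_pmf (\<lambda>ys. w # ys) (noisy_count cs \<rho>))" for c cs
    by (simp add: map_pmf_def bind_assoc_pmf bind_return_pmf)
  have f1: "rb \<alpha> (bind_pmf (map_pmf (\<lambda>y. a + y) (discrete_gaussian (1 / (2 * \<rho>))))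
      (\<lambda>w. map_pmf (\<lambda>ys. w # ys) (noisy_count as \<rho>)))
      (bind_pmf (map_pmf (\<lambda>y. b + y) (discrete_gaussian (1 / (2 * \<rho>))))
      (\<lambda>w. map_pmf (\<lambda>ys. w # ys) (noisy_count bs' \<rho>)))
      (exp ((\<alpha> - 1) * (\<alpha> * \<rho> * (real_of_int (a - b))\<^sup>2)) * exp ((\<alpha> - 1) * (\<alpha> * \<rho> * real_of_int (sqd as bs'))))"
    using Cons.IH[OF len] al r by (intro rb_bind dg_shift rb_map) auto
  have f2: "exp ((\<alpha> - 1) * (\<alpha> * \<rho> * (real_of_int (a - b))\<^sup>2)) * exp ((\<alpha> - 1) * (\<alpha> * \<rho> * real_of_int (sqd as bs')))
      = exp ((\<alpha> - 1) * (\<alpha> * \<rho> * real_of_int (sqd (a # as) (b # bs'))))"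
    by (simp add: exp_add[symmetric] algebra_simps)
  show ?case unfolding bs eq using f1 unfolding f2 .
qed

lemma nc_rb_le:
  fixes \<rho> \<alpha> C :: real
  assumes al: "\<alpha> > 1" and r: "\<rho> > 0" and len: "length as = length bs"
    and le: "real_of_int (sqd as bs) \<le> C"
  shows "rb \<alpha> (noisy_count as \<rho>) (noisy_count bs \<rho>) (exp ((\<alpha> - 1) * (\<alpha> * \<rho> * C)))"
proof (rule rb_mono[OF nc_rb[OF al r len]])
  have "\<alpha> * \<rho> * real_of_int (sqd as bs) \<le> \<alpha> * \<rho> * C"
    by (rule mult_left_mono[OF le]) (use al r in simp)
  hence "(\<alpha> - 1) * (\<alpha> * \<rho> * real_of_int (sqd as bs)) \<le> (\<alpha> - 1) * (\<alpha> * \<rho> * C)"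
    by (rule mult_left_mono) (use al in simp)
  thus "exp ((\<alpha> - 1) * (\<alpha> * \<rho> * real_of_int (sqd as bs))) \<le> exp ((\<alpha> - 1) * (\<alpha> * \<rho> * C))" by simp
qed

lemma hist_map:
  "hist so ao b K y = map (\<lambda>(s,j). int (size (filter_mset (\<lambda>r. so r = s \<and> b (ao r) = j) y)))
     (List.product [Male, Female] [0..<K])"
  by (simp add: hist_def)

lemma length_hist: "length (hist so ao b K y) = length (hist so ao b K y')"
  by (simp add: hist_map)

lemma tab_rb:
  fixes \<rho> \<alpha> \<gamma> C :: real
  assumes al: "\<alpha> > 1" and r: "\<rho> > 0" and g0: "0 < \<gamma>" and g1: "\<gamma> < 1"
    and hc: "real_of_int (sqd [int (size y)] [int (size y')]) \<le> C"
    and h4: "real_of_int (sqd (hist so ao b4 4 y) (hist so ao b4 4 y')) \<le> C"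
    and h9: "real_of_int (sqd (hist so ao b9 9 y) (hist so ao b9 9 y')) \<le> C"
    and h23: "real_of_int (sqd (hist so ao b23 23 y) (hist so ao b23 23 y')) \<le> C"
  shows "rb \<alpha> (tab TO \<Theta>1 \<Theta>2 \<Theta>3 so ao b4 b9 b23 y P \<rho> \<gamma>) (tab TO \<Theta>1 \<Theta>2 \<Theta>3 so ao b4 b9 b23 y' P \<rho> \<gamma>)
     (exp ((\<alpha> - 1) * (\<alpha> * \<rho> * C)))"
proof (cases "P \<in> TO")
  case True
  have "rb \<alpha> (noisy_count [int (size y)] \<rho>) (noisy_count [int (size y')] \<rho>) (exp ((\<alpha> - 1) * (\<alpha> * \<rho> * C)))"
    by (rule nc_rb_le[OF al r _ hc]) simp
  thus ?thesis unfolding tab_def using True by (simp only: if_True)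
next
  case False
  have C0: "C \<ge> 0" using hc by (simp add: sqd_def) (smt (verit) zero_le_power2)
  have r1: "\<gamma> * \<rho> > 0" "(1 - \<gamma>) * \<rho> > 0" using g0 g1 r by auto
  have "rb \<alpha> (bind_pmf (noisy_count [int (size y)] (\<gamma> * \<rho>)) (\<lambda>tl.
        let t = real_of_int (hd tl) in
        if t < \<Theta>1 then noisy_count [int (size y)] ((1 - \<gamma>) * \<rho>)
        else if t < \<Theta>2 then noisy_count (hist so ao b4 4 y) ((1 - \<gamma>) * \<rho>)
        else if t < \<Theta>3 then noisy_count (hist so ao b9 9 y) ((1 - \<gamma>) * \<rho>)
        else noisy_count (hist so ao b23 23 y) ((1 - \<gamma>) * \<rho>)))
      (bind_pmf (noisy_count [int (size y')] (\<gamma> * \<rho>)) (\<lambda>tl.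
        let t = real_of_int (hd tl) in
        if t < \<Theta>1 then noisy_count [int (size y')] ((1 - \<gamma>) * \<rho>)
        else if t < \<Theta>2 then noisy_count (hist so ao b4 4 y') ((1 - \<gamma>) * \<rho>)
        else if t < \<Theta>3 then noisy_count (hist so ao b9 9 y') ((1 - \<gamma>) * \<rho>)
        else noisy_count (hist so ao b23 23 y') ((1 - \<gamma>) * \<rho>)))
      (exp ((\<alpha> - 1) * (\<alpha> * (\<gamma> * \<rho>) * C)) * exp ((\<alpha> - 1) * (\<alpha> * ((1 - \<gamma>) * \<rho>) * C)))"
  proof (rule rb_bind[OF al])
    show "rb \<alpha> (noisy_count [int (size y)] (\<gamma> * \<rho>)) (noisy_count [int (size y')] (\<gamma> * \<rho>))
        (exp ((\<alpha> - 1) * (\<alpha> * (\<gamma> * \<rho>) * C)))"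
      using al r1 hc by (intro nc_rb_le) auto
  next
    fix tl
    show "rb \<alpha> (let t = real_of_int (hd tl) in
        if t < \<Theta>1 then noisy_count [int (size y)] ((1 - \<gamma>) * \<rho>)
        else if t < \<Theta>2 then noisy_count (hist so ao b4 4 y) ((1 - \<gamma>) * \<rho>)
        else if t < \<Theta>3 then noisy_count (hist so ao b9 9 y) ((1 - \<gamma>) * \<rho>)
        else noisy_count (hist so ao b23 23 y) ((1 - \<gamma>) * \<rho>))
      (let t = real_of_int (hd tl) in
        if t < \<Theta>1 then noisy_count [int (size y')] ((1 - \<gamma>) * \<rho>)
        else if t < \<Theta>2 then noisy_count (hist so ao b4 4 y') ((1 - \<gamma>) * \<rho>)
        else if t < \<Theta>3 then noisy_count (hist so ao b9 9 y') ((1 - \<gamma>) * \<rho>)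
        else noisy_count (hist so ao b23 23 y') ((1 - \<gamma>) * \<rho>))
      (exp ((\<alpha> - 1) * (\<alpha> * ((1 - \<gamma>) * \<rho>) * C)))"
    proof -
      have n1: "rb \<alpha> (noisy_count [int (size y)] ((1 - \<gamma>) * \<rho>)) (noisy_count [int (size y')] ((1 - \<gamma>) * \<rho>)) (exp ((\<alpha> - 1) * (\<alpha> * ((1 - \<gamma>) * \<rho>) * C)))"
        by (rule nc_rb_le[OF al r1(2) _ hc]) simp
      have n4: "rb \<alpha> (noisy_count (hist so ao b4 4 y) ((1 - \<gamma>) * \<rho>)) (noisy_count (hist so ao b4 4 y') ((1 - \<gamma>) * \<rho>)) (exp ((\<alpha> - 1) * (\<alpha> * ((1 - \<gamma>) * \<rho>) * C)))"
        by (rule nc_rb_le[OF al r1(2) length_hist h4])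
      have n9: "rb \<alpha> (noisy_count (hist so ao b9 9 y) ((1 - \<gamma>) * \<rho>)) (noisy_count (hist so ao b9 9 y') ((1 - \<gamma>) * \<rho>)) (exp ((\<alpha> - 1) * (\<alpha> * ((1 - \<gamma>) * \<rho>) * C)))"
        by (rule nc_rb_le[OF al r1(2) length_hist h9])
      have n23: "rb \<alpha> (noisy_count (hist so ao b23 23 y) ((1 - \<gamma>) * \<rho>)) (noisy_count (hist so ao b23 23 y') ((1 - \<gamma>) * \<rho>)) (exp ((\<alpha> - 1) * (\<alpha> * ((1 - \<gamma>) * \<rho>) * C)))"
        by (rule nc_rb_le[OF al r1(2) length_hist h23])
      show ?thesis unfolding Let_def using n1 n4 n9 n23 by (simp del: noisy_count.simps)
    qed
  qed auto
  moreover have "exp ((\<alpha> - 1) * (\<alpha> * (\<gamma> * \<rho>) * C)) * exp ((\<alpha> - 1) * (\<alpha> * ((1 - \<gamma>) * \<rho>) * C))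
      = exp ((\<alpha> - 1) * (\<alpha> * \<rho> * C))"
    by (simp add: mult_exp_exp algebra_simps)
  ultimately show ?thesis using False unfolding tab_def by simp
qed

lemma sqd_map: "sqd (map f L) (map g L) = sum_list (map (\<lambda>l. (f l - g l)\<^sup>2) L)"
  by (induction L) auto

lemma ind_sum_le:
  assumes "distinct L"
  shows "sum_list (map (\<lambda>l. if Q \<and> l = k then 1 else 0) L) \<le> (if Q then 1 else (0::int))"
proof -
  have "sum_list (map (\<lambda>l. if Q \<and> l = k then 1 else 0) L) = (\<Sum>l\<in>set L. if Q \<and> l = k then 1 else (0::int))"
    using assms by (rule sum_list_distinct_conv_sum_set)
  also have "\<dots> = (if Q then (\<Sum>l\<in>set L. if l = k then 1 else 0) else 0)"
    by auto
  also have "\<dots> \<le> (if Q then 1 else 0)" by simp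
  finally show ?thesis .
qed

lemma sq01: "(u::int) \<in> {0,1} \<Longrightarrow> v \<in> {0,1} \<Longrightarrow> (u - v)\<^sup>2 \<le> u + v"
  by auto

lemma hist_bound:
  "real_of_int (sqd (hist so ao b K (filter_mset \<phi> (add_mset r z))) (hist so ao b K (filter_mset \<phi> (add_mset r' z))))
     \<le> of_bool (\<phi> r) + of_bool (\<phi> r')"
proof -
  define L where "L = List.product [Male, Female] [0..<K]"
  have dL: "distinct L" unfolding L_def by (rule distinct_product) simp_all
  define key where "key x = (so x, b (ao x))" for x
  define N where "N l = int (size (filter_mset (\<lambda>x. so x = fst l \<and> b (ao x) = snd l) (filter_mset \<phi> z)))" for l
  define I where "I x l = (if \<phi> x \<and> l = key x then 1 else (0::int))" for x l
  have ent: "(\<lambda>(s,j). int (size (filter_mset (\<lambda>x. so x = s \<and> b (ao x) = j) (filter_mset \<phi> (add_mset x z))))) l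
      = N l + I x l" for x l
    by (cases l) (auto simp: N_def I_def key_def)
  have "sqd (hist so ao b K (filter_mset \<phi> (add_mset r z))) (hist so ao b K (filter_mset \<phi> (add_mset r' z)))
      = sum_list (map (\<lambda>l. (I r l - I r' l)\<^sup>2) L)"
    unfolding hist_map L_def[symmetric] sqd_map ent by simp
  also have "\<dots> \<le> sum_list (map (\<lambda>l. I r l + I r' l) L)"
    by (intro sum_list_mono sq01) (auto simp: I_def)
  also have "\<dots> = sum_list (map (I r) L) + sum_list (map (I r') L)"
    by (simp add: sum_list_addf)
  also have "\<dots> \<le> (if \<phi> r then 1 else 0) + (if \<phi> r' then 1 else 0)"
    unfolding I_def by (intro add_mono ind_sum_le dL)
  finally have "sqd (hist so ao b K (filter_mset \<phi> (add_mset r z))) (hist so ao b K (filter_mset \<phi> (add_mset r' z)))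
      \<le> (if \<phi> r then 1 else 0) + (if \<phi> r' then 1 else 0)" .
  hence "real_of_int (sqd (hist so ao b K (filter_mset \<phi> (add_mset r z))) (hist so ao b K (filter_mset \<phi> (add_mset r' z))))
      \<le> real_of_int ((if \<phi> r then 1 else 0) + (if \<phi> r' then 1 else 0))" by linarith
  thus ?thesis by auto
qed

lemma size_bound:
  "real_of_int (sqd [int (size (filter_mset \<phi> (add_mset r z)))] [int (size (filter_mset \<phi> (add_mset r' z)))])
     \<le> of_bool (\<phi> r) + of_bool (\<phi> r')"
  by auto

theorem mainTheorem4:
  fixes \<omega> :: nat
    and Pl :: "nat \<Rightarrow> 'p set"
    and g :: "nat \<Rightarrow> 'r \<Rightarrow> 'p set"
    and TotalOnly :: "'p set"
    and \<Theta>1 \<Theta>2 \<Theta>3 :: real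
    and sex_of :: "'r \<Rightarrow> sex" and age_of :: "'r \<Rightarrow> 'a"
    and b4 b9 b23 :: "'a \<Rightarrow> nat"
    and rho :: "nat \<Rightarrow> real" and \<gamma> :: real
  assumes "\<And>i. i \<in> {1..\<omega>} \<Longrightarrow> finite (Pl i)"
    and "\<And>i r. i \<in> {1..\<omega>} \<Longrightarrow> g i r \<subseteq> Pl i"
    and "\<And>i. i \<in> {1..\<omega>} \<Longrightarrow> stability g i \<ge> 1"
    and "\<And>a. b4 a < 4" and "\<And>a. b9 a < 9" and "\<And>a. b23 a < 23"
    and "\<And>i. i \<in> {1..\<omega>} \<Longrightarrow> rho i > 0"
    and "0 < \<gamma>" and "\<gamma> < 1"
  shows "bounded_zCDP (safetab_p \<omega> Pl g TotalOnly \<Theta>1 \<Theta>2 \<Theta>3 sex_of age_of b4 b9 b23 rho \<gamma>)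
           (2 * (\<Sum>i = 1..\<omega>. rho i))"
proof -
  note finPl = assms(1) and gsub = assms(2) and stab = assms(3) and rpos = assms(7)
    and g0 = assms(8) and g1 = assms(9)
  define S where "S = (SIGMA i:{1..\<omega>}. Pl i)"
  have finS: "finite S" unfolding S_def using finPl by (intro finite_SigmaI) auto
  define \<rho>' where "\<rho>' i = rho i / real (stability g i)" for i
  have r'pos: "\<rho>' i > 0" if "i \<in> {1..\<omega>}" for i
    using rpos[OF that] stab[OF that] by (simp add: \<rho>'_def)
  have card_le: "card (g i q) \<le> stability g i" if i: "i \<in> {1..\<omega>}" for i q
  proof -
    have "(\<lambda>r. card (g i r)) ` UNIV \<subseteq> {..card (Pl i)}"
      using gsub[OF i] finPl[OF i] by (auto intro: card_mono)
    hence "finite ((\<lambda>r. card (g i r)) ` UNIV)" by (rule finite_subset) simp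
    thus ?thesis unfolding stability_def by (intro Max_ge) auto
  qed
  define Tot where "Tot = (\<Sum>i = 1..\<omega>. rho i)"
  have Tot0: "Tot \<ge> 0" unfolding Tot_def using rpos by (intro sum_nonneg) (auto intro: less_imp_le)
  show ?thesis unfolding bounded_zCDP_def
  proof (intro allI impI)
    fix x x' :: "'r multiset" and \<alpha> :: real
    assume nb: "bounded_neighbors x x'" and al: "\<alpha> > 1"
    then obtain z r r' where x: "x = add_mset r z" and x': "x' = add_mset r' z"
      unfolding bounded_neighbors_def by blast
    define c where "c i P = (of_bool (P \<in> g i r) + of_bool (P \<in> g i r') :: real)" for i P
    define B where "B s = exp ((\<alpha> - 1) * (\<alpha> * \<rho>' (fst s) * c (fst s) (snd s)))" for s
    have each: "rb \<alpha> ((\<lambda>(i, P). tab TotalOnly \<Theta>1 \<Theta>2 \<Theta>3 sex_of age_of b4 b9 b23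
                   (filter_mset (\<lambda>q. P \<in> g i q) x) P (rho i / real (stability g i)) \<gamma>) s)
                 ((\<lambda>(i, P). tab TotalOnly \<Theta>1 \<Theta>2 \<Theta>3 sex_of age_of b4 b9 b23
                   (filter_mset (\<lambda>q. P \<in> g i q) x') P (rho i / real (stability g i)) \<gamma>) s) (B s)"
      if s: "s \<in> S" for s
    proof -
      obtain i P where sip: "s = (i, P)" by (cases s)
      have i: "i \<in> {1..\<omega>}" using s sip by (auto simp: S_def)
      have "rb \<alpha> (tab TotalOnly \<Theta>1 \<Theta>2 \<Theta>3 sex_of age_of b4 b9 b23 (filter_mset (\<lambda>q. P \<in> g i q) x) P (\<rho>' i) \<gamma>)
                 (tab TotalOnly \<Theta>1 \<Theta>2 \<Theta>3 sex_of age_of b4 b9 b23 (filter_mset (\<lambda>q. P \<in> g i q) x') P (\<rho>' i) \<gamma>)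
                 (exp ((\<alpha> - 1) * (\<alpha> * \<rho>' i * c i P)))"
        unfolding x x' c_def
        by (intro tab_rb al r'pos[OF i] g0 g1 size_bound hist_bound)
      thus ?thesis by (simp add: sip B_def \<rho>'_def)
    qed
    have B0: "B s \<ge> 0" for s by (simp add: B_def)
    have step1: "rb \<alpha> (safetab_p \<omega> Pl g TotalOnly \<Theta>1 \<Theta>2 \<Theta>3 sex_of age_of b4 b9 b23 rho \<gamma> x)
                     (safetab_p \<omega> Pl g TotalOnly \<Theta>1 \<Theta>2 \<Theta>3 sex_of age_of b4 b9 b23 rho \<gamma> x')
                     (\<Prod>s\<in>S. B s)"
      unfolding safetab_p_def S_def[symmetric]
      by (rule rb_Pi[OF al finS each B0])
    have sum_le: "(\<Sum>s\<in>S. \<rho>' (fst s) * c (fst s) (snd s)) \<le> 2 * Tot"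
    proof -
      have "(\<Sum>s\<in>S. \<rho>' (fst s) * c (fst s) (snd s)) = (\<Sum>i\<in>{1..\<omega>}. \<Sum>P\<in>Pl i. \<rho>' i * c i P)"
        unfolding S_def using finPl by (subst sum.Sigma) (auto simp: case_prod_beta)
      also have "\<dots> \<le> (\<Sum>i\<in>{1..\<omega>}. 2 * rho i)"
      proof (rule sum_mono)
        fix i assume i: "i \<in> {1..\<omega>}"
        have "(\<Sum>P\<in>Pl i. c i P) = real (card (Pl i \<inter> g i r)) + real (card (Pl i \<inter> g i r'))"
          unfolding c_def using finPl[OF i] by (simp add: sum.distrib)
        also have "\<dots> = real (card (g i r)) + real (card (g i r'))"
          using gsub[OF i] by (simp add: Int_absorb1)
        also have "\<dots> \<le> 2 * real (stability g i)"
          using card_le[OF i, of r] card_le[OF i, of r'] by simp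
        finally have cs: "(\<Sum>P\<in>Pl i. c i P) \<le> 2 * real (stability g i)" .
        have "(\<Sum>P\<in>Pl i. \<rho>' i * c i P) = \<rho>' i * (\<Sum>P\<in>Pl i. c i P)"
          by (simp add: sum_distrib_left)
        also have "\<dots> \<le> \<rho>' i * (2 * real (stability g i))"
          using r'pos[OF i] cs by (intro mult_left_mono) auto
        also have "\<dots> = 2 * rho i"
          using stab[OF i] by (simp add: \<rho>'_def)
        finally show "(\<Sum>P\<in>Pl i. \<rho>' i * c i P) \<le> 2 * rho i" .
      qed
      also have "\<dots> = 2 * Tot" by (simp add: Tot_def sum_distrib_left)
      finally show ?thesis .
    qed
    have "(\<Prod>s\<in>S. B s) = exp ((\<alpha> - 1) * \<alpha> * (\<Sum>s\<in>S. \<rho>' (fst s) * c (fst s) (snd s)))"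
      unfolding B_def using finS by (simp add: exp_sum[symmetric] sum_distrib_left mult_ac)
    also have "\<dots> \<le> exp ((\<alpha> - 1) * (\<alpha> * (2 * Tot)))"
    proof -
      have "(\<alpha> - 1) * \<alpha> * (\<Sum>s\<in>S. \<rho>' (fst s) * c (fst s) (snd s)) \<le> (\<alpha> - 1) * \<alpha> * (2 * Tot)"
        using al sum_le by (intro mult_left_mono) auto
      thus ?thesis by (simp add: mult_ac)
    qed
    finally have "rb \<alpha> (safetab_p \<omega> Pl g TotalOnly \<Theta>1 \<Theta>2 \<Theta>3 sex_of age_of b4 b9 b23 rho \<gamma> x)
                     (safetab_p \<omega> Pl g TotalOnly \<Theta>1 \<Theta>2 \<Theta>3 sex_of age_of b4 b9 b23 rho \<gamma> x')
                     (exp ((\<alpha> - 1) * (\<alpha> * (2 * Tot))))"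
      by (rule rb_mono[OF step1])
    hence "renyi_div \<alpha> (safetab_p \<omega> Pl g TotalOnly \<Theta>1 \<Theta>2 \<Theta>3 sex_of age_of b4 b9 b23 rho \<gamma> x)
                     (safetab_p \<omega> Pl g TotalOnly \<Theta>1 \<Theta>2 \<Theta>3 sex_of age_of b4 b9 b23 rho \<gamma> x')
           \<le> ereal (\<alpha> * (2 * Tot))"
      using al Tot0 by (intro rb_final) auto
    thus "renyi_div \<alpha> (safetab_p \<omega> Pl g TotalOnly \<Theta>1 \<Theta>2 \<Theta>3 sex_of age_of b4 b9 b23 rho \<gamma> x)
                     (safetab_p \<omega> Pl g TotalOnly \<Theta>1 \<Theta>2 \<Theta>3 sex_of age_of b4 b9 b23 rho \<gamma> x')
           \<le> ereal (\<alpha> * (2 * (\<Sum>i = 1..\<omega>. rho i)))"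
      by (simp add: Tot_def)
  qed
qed


end
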